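(* Let $w$ be a perfectly clustering word over a totally ordered alphabet, and let $a_1\pi_1a_2\pi_2\cdots\pi_{k-1}a_k$ be the palindromic special factorization of the Lyndon conjugate of $w$. Then for any two consecutive rows of the Burrows–Wheeler matrix of $w$, viewed as words $w'$ (upper row) and $w''$ (next row), there exist words $x,y,m$ such that $w'=ymx$, $w''=y\tilde m x$, and $xy\in\{\pi_1,\dots,\pi_{k-1}\}$.
   Context: $\tilde m$ denotes the reversal of the word $m$. A special factorization of a word $v$ is a factorization $v=a_1\pi_1a_2\cdots\pi_{k-1}a_k$ where the set of letters occurring in $v$ is $\{a_1<\cdots<a_k\}$ and $\pi_1,\dots,\pi_{k-1}$ are words; it is palindromic if every $\pi_i$ is a palindrome. Lexicographic order: a proper prefix is smaller. A Lyndon word is a primitive word strictly smaller than its other conjugates. For a primitive word $v$ of length $n$ with conjugates $v_1<\cdots<v_n$, $\mathrm{bw}(v)$ is the word formed by the last letters of $v_1,\dots,v_n$; $v$ is perfectly clustering if it is primitive and $\mathrm{bw}(v)$ is weakly decreasing. The Burrows–Wheeler matrix of $v$ has as rows the conjugates $v_1,\dots,v_n$ in this order. The Lyndon conjugate of a perfectly clustering word is perfectly clustering and has a unique palindromic special factorization. *)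

theory Defs
  imports Main "HOL-Library.List_Lexorder"
begin

text \<open>Words are lists over a totally ordered alphabet. The order on words is the
lexicographic order of HOL-Library.List_Lexorder, in which a proper prefix is smaller.\<close>

definition primitive :: "'a list \<Rightarrow> bool" where
  "primitive v \<longleftrightarrow> v \<noteq> [] \<and> \<not> (\<exists>u k. 2 \<le> k \<and> v = concat (replicate k u))"

definition conjugates :: "'a list \<Rightarrow> 'a list set" where
  "conjugates v = {rotate i v | i. i < length v}"

definition lyndon :: "'a::linorder list \<Rightarrow> bool" where
  "lyndon v \<longleftrightarrow> primitive v \<and> (\<forall>u \<in> conjugates v. u \<noteq> v \<longrightarrow> v < u)"

text \<open>Rows of the Burrows-Wheeler matrix: the conjugates in increasing order
(for a primitive word they are pairwise distinct).\<close>
definition bw_matrix :: "'a::linorder list \<Rightarrow> 'a list list" where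
  "bw_matrix v = sorted_list_of_set (conjugates v)"

definition bw :: "'a::linorder list \<Rightarrow> 'a list" where
  "bw v = map last (bw_matrix v)"

definition perfectly_clustering :: "'a::linorder list \<Rightarrow> bool" where
  "perfectly_clustering v \<longleftrightarrow> primitive v \<and> sorted_wrt (\<ge>) (bw v)"

text \<open>Given letters a1..ak and words p1..p(k-1), build a1 p1 a2 ... p(k-1) ak.\<close>
fun interleave :: "'a list \<Rightarrow> 'a list list \<Rightarrow> 'a list" where
  "interleave [] ps = []"
| "interleave (a # as) ps = a # concat (map2 (\<lambda>p b. p @ [b]) ps as)"

definition special_factorization :: "'a::linorder list \<Rightarrow> 'a list list \<Rightarrow> bool" where
  "special_factorization v ps \<longleftrightarrow>
     length ps + 1 = card (set v) \<and> v = interleave (sorted_list_of_set (set v)) ps"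

definition palindromic_special_factorization :: "'a::linorder list \<Rightarrow> 'a list list \<Rightarrow> bool" where
  "palindromic_special_factorization v ps \<longleftrightarrow>
     special_factorization v ps \<and> (\<forall>p \<in> set ps. rev p = p)"

end

theory Submission
  imports Defs "HOL-Library.Multiset"
begin

lemma lex_app_less: "length xs = length ys \<Longrightarrow> (xs @ a < ys @ b) = (xs < ys \<or> xs = ys \<and> a < b)"
  for xs ys :: "'a::linorder list"
proof (induction xs arbitrary: ys)
  case (Cons x xs) then show ?case by (cases ys) auto
qed simp

lemma lex_app_le: "length xs = length ys \<Longrightarrow> (xs @ a \<le> ys @ b) = (xs < ys \<or> xs = ys \<and> a \<le> b)"
  for xs ys :: "'a::linorder list"
proof (induction xs arbitrary: ys)
  case (Cons x xs) then show ?case by (cases ys) auto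
qed simp

lemma lex_pre_less: "(zs @ xs < zs @ ys) = (xs < ys)" for xs ys :: "'a::linorder list"
  by (induction zs) auto

lemma lex_pre_le: "(zs @ xs \<le> zs @ ys) = (xs \<le> ys)" for xs ys :: "'a::linorder list"
  by (induction zs) auto

lemma lex_hd_mono: "xs \<noteq> [] \<Longrightarrow> ys \<noteq> [] \<Longrightarrow> xs \<le> ys \<Longrightarrow> hd xs \<le> hd ys" for xs ys :: "'a::linorder list"
  by (cases xs; cases ys) auto

lemma lex_hd_less: "xs \<noteq> [] \<Longrightarrow> ys \<noteq> [] \<Longrightarrow> hd xs < hd ys \<Longrightarrow> xs < ys" for xs ys :: "'a::linorder list"
  by (cases xs; cases ys) auto

lemma lex_prefix_between: "p @ a \<le> z \<Longrightarrow> z \<le> p @ b \<Longrightarrow> \<exists>z0. z = p @ z0" for z :: "'a::linorder list"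
proof (induction p arbitrary: z)
  case Nil then show ?case by auto
next
  case (Cons c p)
  then obtain d z' where z: "z = d # z'" by (cases z) auto
  with Cons.prems have "d = c" by auto
  with Cons.prems z have "p @ a \<le> z'" "z' \<le> p @ b" by auto
  with Cons.IH obtain z0 where "z' = p @ z0" by blast
  with z \<open>d = c\<close> show ?case by auto
qed

lemma strict_nth_less_iff: "sorted_wrt (<) xs \<Longrightarrow> i < length xs \<Longrightarrow> j < length xs \<Longrightarrow> (xs!i < xs!j) = (i < j)"
  for xs :: "'b::linorder list"
  by (metis leD linorder_neqE_nat sorted_wrt_nth_less order_less_imp_not_less)


lemma conj_iff: "v \<noteq> [] \<Longrightarrow> u \<in> conjugates v \<longleftrightarrow> (\<exists>i. u = rotate i v)"
proof
  assume "u \<in> conjugates v" then show "\<exists>i. u = rotate i v" unfolding conjugates_def by auto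
next
  assume v: "v \<noteq> []" and "\<exists>i. u = rotate i v"
  then obtain i where "u = rotate i v" by blast
  then have "u = rotate (i mod length v) v" using rotate_conv_mod[of i v] by simp
  moreover have "i mod length v < length v" using v by simp
  ultimately show "u \<in> conjugates v" unfolding conjugates_def by blast
qed

lemma interleave_cons2: "interleave (a # b # as) (p # ps) = a # p @ interleave (b # as) ps"
  by simp

lemma interleave_factor:
  "length ps = length as \<Longrightarrow> i < length ps \<Longrightarrow>
   \<exists>\<alpha> \<beta>. interleave (a # as) ps = \<alpha> @ [(a # as) ! i] @ ps ! i @ [(a # as) ! Suc i] @ \<beta>"
proof (induction ps arbitrary: a as i)
  case Nil then show ?case by simp
next
  case (Cons p ps)
  then obtain b as' where as: "as = b # as'" by (cases as) auto
  show ?case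
  proof (cases i)
    case 0
    have "interleave (a # as) (p # ps) = [] @ [a] @ p @ [b] @ concat (map2 (\<lambda>p b. p @ [b]) ps as')"
      using as by simp
    then show ?thesis using 0 as by auto
  next
    case (Suc i')
    have "length ps = length as'" "i' < length ps" using Cons.prems as Suc by auto
    then obtain \<alpha> \<beta> where ab: "interleave (b # as') ps = \<alpha> @ [(b # as') ! i'] @ ps ! i' @ [(b # as') ! Suc i'] @ \<beta>"
      using Cons.IH by blast
    have "interleave (a # as) (p # ps) = (a # p @ \<alpha>) @ [(b # as') ! i'] @ ps ! i' @ [(b # as') ! Suc i'] @ \<beta>"
      using as ab interleave_cons2 by simp
    moreover have "(a # as) ! i = (b # as') ! i'" "(a # as) ! Suc i = (b # as') ! Suc i'"
      "(p # ps) ! i = ps ! i'" using Suc as by auto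
    ultimately show ?thesis by metis
  qed
qed

lemma interleave_length:
  "length ps = length as \<Longrightarrow> length (interleave (a # as) ps) = Suc (\<Sum>i<length ps. Suc (length (ps ! i)))"
proof (induction ps arbitrary: a as)
  case Nil then show ?case by simp
next
  case (Cons p ps)
  then obtain b as' where as: "as = b # as'" by (cases as) auto
  have "length (interleave (a # as) (p # ps)) = Suc (length p) + length (interleave (b # as') ps)"
    using as interleave_cons2 by simp
  also have "\<dots> = Suc (length p) + Suc (\<Sum>i<length ps. Suc (length (ps ! i)))"
    using Cons.IH Cons.prems as by simp
  also have "\<dots> = Suc (\<Sum>i<length (p # ps). Suc (length ((p # ps) ! i)))"
    by (simp only: length_Cons sum.lessThan_Suc_shift nth_Cons_0 nth_Cons_Suc)
  finally show ?case .
qed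

lemma split_diff: "length u = length v \<Longrightarrow> u \<noteq> v \<Longrightarrow>
  \<exists>x y1 y2. u = x @ y1 \<and> v = x @ y2 \<and> y1 \<noteq> [] \<and> y2 \<noteq> [] \<and> hd y1 \<noteq> hd y2"
proof (induction u arbitrary: v)
  case Nil then show ?case by simp
next
  case (Cons a u)
  then obtain b v' where v: "v = b # v'" by (cases v) auto
  show ?case
  proof (cases "a = b")
    case True
    then have "length u = length v'" "u \<noteq> v'" using Cons.prems v by auto
    then obtain x y1 y2 where "u = x @ y1 \<and> v' = x @ y2 \<and> y1 \<noteq> [] \<and> y2 \<noteq> [] \<and> hd y1 \<noteq> hd y2"
      using Cons.IH by blast
    then have "a # u = (a # x) @ y1 \<and> v = (a # x) @ y2 \<and> y1 \<noteq> [] \<and> y2 \<noteq> [] \<and> hd y1 \<noteq> hd y2"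
      using v True by simp
    then show ?thesis by blast
  next
    case False
    then have "a # u = [] @ (a # u) \<and> v = [] @ (b # v') \<and> a # u \<noteq> [] \<and> b # v' \<noteq> [] \<and> hd (a # u) \<noteq> hd (b # v')"
      using v by simp
    then show ?thesis by blast
  qed
qed

locale pcw =
  fixes w :: "'a::linorder list"
  assumes pcw: "perfectly_clustering w"
begin

definition C where "C = conjugates w"
definition L where "L = length w"
definition Rs where "Rs = bw_matrix w"
definition n where "n = length Rs"

lemma w_ne: "w \<noteq> []"
  using pcw unfolding perfectly_clustering_def primitive_def by auto

lemma L_pos: "0 < L" using w_ne L_def by auto

lemma C_iff: "u \<in> C \<longleftrightarrow> (\<exists>i. u = rotate i w)"
  using conj_iff[OF w_ne] C_def by auto

lemma C_rot: "u \<in> C \<Longrightarrow> rotate i u \<in> C"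
  by (auto simp: C_iff rotate_rotate)

lemma C_len: "u \<in> C \<Longrightarrow> length u = L"
  by (auto simp: C_iff L_def)

lemma C_ne: "u \<in> C \<Longrightarrow> u \<noteq> []"
  using C_len L_pos by fastforce

lemma C_swap: "xs @ ys \<in> C \<Longrightarrow> ys @ xs \<in> C"
  by (metis C_rot rotate_append)

lemma w_C: "w \<in> C"
  using C_iff by (metis rotate0 id_apply)

lemma C_eq_image: "C = (\<lambda>i. rotate i w) ` {..<L}"
  unfolding C_def conjugates_def L_def by auto

lemma C_finite: "finite C"
  using C_eq_image by auto

lemma C_card: "card C \<le> L"
  using C_eq_image card_image_le by (metis card_lessThan finite_lessThan)

lemma Rs_sorted: "sorted_wrt (<) Rs"
  unfolding Rs_def bw_matrix_def by simp

lemma Rs_set: "set Rs = C"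
  unfolding Rs_def bw_matrix_def C_def[symmetric] using C_finite by simp

lemma Rs_distinct: "distinct Rs"
  using Rs_sorted strict_sorted_iff by blast

lemma n_card: "n = card C"
  unfolding n_def using distinct_card[OF Rs_distinct] Rs_set by simp

lemma Rs_nth_C: "x < n \<Longrightarrow> Rs ! x \<in> C"
  unfolding n_def Rs_set[symmetric] by (rule nth_mem)

lemma Rs_less_iff: "i < n \<Longrightarrow> j < n \<Longrightarrow> (Rs!i < Rs!j) = (i < j)"
  unfolding n_def by (rule strict_nth_less_iff[OF Rs_sorted])

lemma C_obtain: "u \<in> C \<Longrightarrow> \<exists>x<n. u = Rs ! x"
proof -
  assume "u \<in> C"
  then have "u \<in> set Rs" using Rs_set by simp
  then obtain x where "x < length Rs" "Rs ! x = u" unfolding in_set_conv_nth by blast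
  then show ?thesis unfolding n_def by auto
qed

lemma bw_sorted: "sorted_wrt (\<ge>) (map last Rs)"
  using pcw unfolding perfectly_clustering_def bw_def Rs_def by simp

lemma PC_L: "u \<in> C \<Longrightarrow> v \<in> C \<Longrightarrow> u \<le> v \<Longrightarrow> last v \<le> last u"
proof -
  assume u: "u \<in> C" and v: "v \<in> C" and le: "u \<le> v"
  obtain i where i: "i < n" "u = Rs!i" using C_obtain u by blast
  obtain j where j: "j < n" "v = Rs!j" using C_obtain v by blast
  show ?thesis
  proof (cases "i = j")
    case True then show ?thesis using i j by simp
  next
    case False
    then have "i < j" using Rs_less_iff[OF j(1) i(1)] le i j by auto
    then show ?thesis
      using sorted_wrt_nth_less[OF bw_sorted, of i j] i j n_def by simp
  qed
qed

definition rk where "rk u = card {v \<in> C. v < u}"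

lemma rk_nth: "x < n \<Longrightarrow> rk (Rs ! x) = x"
proof -
  assume x: "x < n"
  have "{v \<in> C. v < Rs ! x} = (\<lambda>y. Rs ! y) ` {..<x}"
  proof
    show "{v \<in> C. v < Rs ! x} \<subseteq> (\<lambda>y. Rs ! y) ` {..<x}"
    proof
      fix v assume "v \<in> {v \<in> C. v < Rs ! x}"
      then obtain y where "y < n" "v = Rs ! y" "v < Rs ! x" using C_obtain by blast
      then show "v \<in> (\<lambda>y. Rs ! y) ` {..<x}" using Rs_less_iff x by auto
    qed
  next
    show "(\<lambda>y. Rs ! y) ` {..<x} \<subseteq> {v \<in> C. v < Rs ! x}"
      using Rs_less_iff x Rs_nth_C by auto
  qed
  moreover have "inj_on (\<lambda>y. Rs ! y) {..<x}"
    using Rs_distinct x n_def by (auto simp: inj_on_def nth_eq_iff_index_eq)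
  ultimately show ?thesis unfolding rk_def by (simp add: card_image)
qed

lemma rk_C: "u \<in> C \<Longrightarrow> rk u < n \<and> Rs ! (rk u) = u"
proof -
  assume "u \<in> C"
  then obtain x where "x < n" "u = Rs ! x" using C_obtain by blast
  moreover have "rk (Rs ! x) = x" using rk_nth \<open>x < n\<close> by blast
  ultimately show ?thesis by auto
qed


definition rr :: "'a list \<Rightarrow> 'a list" where "rr u = last u # butlast u"

lemma rr_C: "u \<in> C \<Longrightarrow> rr u \<in> C"
proof -
  assume u: "u \<in> C"
  then have "butlast u @ [last u] \<in> C" using C_ne[OF u] by simp
  then show ?thesis unfolding rr_def using C_swap by fastforce
qed

lemma rot1_C: "u \<in> C \<Longrightarrow> rotate1 u \<in> C"
  using C_rot[of u 1] by simp

lemma rr_rot1: "u \<noteq> [] \<Longrightarrow> rr (rotate1 u) = u"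
  unfolding rr_def by (cases u) auto

lemma rot1_rr: "u \<noteq> [] \<Longrightarrow> rotate1 (rr u) = u"
  unfolding rr_def by (metis append_butlast_last_id list.collapse list.sel(1) list.sel(3) list.simps(3) rotate1_hd_tl)

lemma hd_rr: "u \<noteq> [] \<Longrightarrow> hd (rr u) = last u"
  unfolding rr_def by simp

lemma rr_image: "rr ` C = C"
proof
  show "rr ` C \<subseteq> C" using rr_C by blast
  show "C \<subseteq> rr ` C"
  proof
    fix u assume u: "u \<in> C"
    then have "u = rr (rotate1 u)" using rr_rot1 C_ne by simp
    then show "u \<in> rr ` C" using rot1_C[OF u] by blast
  qed
qed

lemma rr_inj: "inj_on rr C"
  by (metis C_ne inj_onI rot1_rr)

lemma hd_sorted: "sorted (map hd Rs)"
proof -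
  have "\<And>i j. i \<le> j \<Longrightarrow> j < length Rs \<Longrightarrow> hd (Rs ! i) \<le> hd (Rs ! j)"
  proof -
    fix i j assume ij: "i \<le> j" "j < length Rs"
    have "Rs ! i \<le> Rs ! j" using sorted_nth_mono[OF strict_sorted_imp_sorted[OF Rs_sorted] ij] .
    moreover have "Rs ! i \<in> C" "Rs ! j \<in> C" using Rs_nth_C ij n_def by auto
    ultimately show "hd (Rs ! i) \<le> hd (Rs ! j)" using lex_hd_mono C_ne by blast
  qed
  then show ?thesis unfolding sorted_iff_nth_mono by simp
qed

lemma last_hd_rev: "rev (map last Rs) = map hd Rs"
proof -
  have m1: "map last Rs = map hd (map rr Rs)"
  proof -
    have "\<And>u. u \<in> set Rs \<Longrightarrow> last u = hd (rr u)" using Rs_set C_ne hd_rr by simp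
    then show ?thesis by simp
  qed
  have "distinct (map rr Rs)" using Rs_distinct rr_inj Rs_set by (simp add: distinct_map)
  moreover have "set (map rr Rs) = set Rs" using rr_image Rs_set by simp
  ultimately have "mset (map rr Rs) = mset Rs" using Rs_distinct set_eq_iff_mset_eq_distinct by blast
  then have "mset (map last Rs) = mset (map hd Rs)" unfolding m1
    by (metis mset_map)
  then have "mset (rev (map last Rs)) = mset (map hd Rs)" by simp
  moreover have "sorted (rev (map last Rs))"
    using bw_sorted by (simp add: sorted_wrt_rev)
  ultimately have "sort (map hd Rs) = rev (map last Rs)" using properties_for_sort by blast
  then show ?thesis using sorted_sort_id[OF hd_sorted] by simp
qed

lemma hd_mirror: "x < n \<Longrightarrow> hd (Rs ! (n - 1 - x)) = last (Rs ! x)"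
proof -
  assume x: "x < n"
  have "hd (Rs ! (n - 1 - x)) = map hd Rs ! (n - 1 - x)" using x n_def by simp
  also have "\<dots> = rev (map last Rs) ! (n - 1 - x)" using last_hd_rev by simp
  also have "\<dots> = map last Rs ! x" using x n_def by (simp add: rev_nth)
  also have "\<dots> = last (Rs ! x)" using x n_def by simp
  finally show ?thesis .
qed


lemma rank_identity:
  assumes u: "u \<in> C"
  shows "rk (rotate1 (Rs ! (n - 1 - rk u))) + rk (rr u) = n - 1"
proof -
  define x where "x = rk u"
  have x: "x < n" "Rs ! x = u" using rk_C[OF u] x_def by auto
  define u' where "u' = Rs ! (n - 1 - x)"
  have u'C: "u' \<in> C" using Rs_nth_C x(1) u'_def by simp
  have rku': "rk u' = n - 1 - x" using rk_nth x(1) u'_def by simp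
  define c where "c = last u"
  have hdu': "hd u' = c" using hd_mirror[OF x(1)] x(2) u'_def c_def by simp
  have une: "u \<noteq> []" and u'ne: "u' \<noteq> []" using C_ne u u'C by auto
  have lu: "length u = L" and lu': "length u' = L" using C_len u u'C by auto
  have u_dec: "u = butlast u @ [c]" using une c_def by simp
  have u'_dec: "u' = c # tl u'" using u'ne hdu' by (metis list.collapse)
  have rru: "rr u = c # butlast u" unfolding rr_def c_def ..
  have rot1u': "rotate1 u' = tl u' @ [c]" using u'_dec by (metis rotate1.simps(2))
  define P1 where "P1 = {v\<in>C. hd v < c}"
  define P2' where "P2' = {v \<in> C. last v = c \<and> v < u}"
  define Q1 where "Q1 = {v\<in>C. c < last v}"
  define Q2' where "Q2' = {v\<in>C. hd v = c \<and> v < u'}"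
  have fin: "finite P1" "finite P2'" "finite Q1" "finite Q2'"
    unfolding P1_def P2'_def Q1_def Q2'_def using C_finite by auto
  have A: "{v\<in>C. v < rr u} = P1 \<union> rr ` P2'"
  proof
    show "{v\<in>C. v < rr u} \<subseteq> P1 \<union> rr ` P2'"
    proof
      fix v assume v: "v \<in> {v\<in>C. v < rr u}"
      then have vC: "v \<in> C" and vl: "v < rr u" by auto
      obtain d v' where vd: "v = d # v'" using C_ne vC by (cases v) auto
      have "length v = L" using C_len vC by simp
      then have lv': "length v' = length (butlast u)" using vd lu by simp
      from vl vd rru have "d < c \<or> d = c \<and> v' < butlast u" by simp
      then show "v \<in> P1 \<union> rr ` P2'"
      proof
        assume "d < c" then show ?thesis using vd vC P1_def by simp
      next
        assume h: "d = c \<and> v' < butlast u"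
        have v''C: "v' @ [c] \<in> C" using rot1_C[OF vC] vd h by simp
        have "v' @ [c] < butlast u @ [c]" using h lex_app_less[OF lv'] by simp
        then have "v' @ [c] < u" using u_dec by simp
        then have "v' @ [c] \<in> P2'" using v''C P2'_def by simp
        moreover have "rr (v' @ [c]) = v" unfolding rr_def using vd h by simp
        ultimately show ?thesis by blast
      qed
    qed
  next
    show "P1 \<union> rr ` P2' \<subseteq> {v\<in>C. v < rr u}"
    proof
      fix v assume "v \<in> P1 \<union> rr ` P2'"
      then show "v \<in> {v\<in>C. v < rr u}"
      proof
        assume "v \<in> P1"
        then have vC: "v \<in> C" and "hd v < c" using P1_def by auto
        then have "v < rr u" using lex_hd_less[OF C_ne[OF vC]] rru by simp
        then show ?thesis using vC by simp
      next
        assume "v \<in> rr ` P2'"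
        then obtain z where z: "z \<in> C" "last z = c" "z < u" "v = rr z" using P2'_def by auto
        have zd: "z = butlast z @ [c]" using z(2) C_ne[OF z(1)] by (metis append_butlast_last_id)
        have lz: "length (butlast z) = length (butlast u)" using C_len z(1) lu by simp
        have "butlast z @ [c] < butlast u @ [c]" using z(3) zd u_dec by simp
        then have "butlast z < butlast u" using lex_app_less[OF lz] by auto
        then have "v < rr u" using z(4) z(2) rru unfolding rr_def by simp
        then show ?thesis using rr_C[OF z(1)] z(4) by simp
      qed
    qed
  qed
  have A': "P1 \<inter> rr ` P2' = {}"
    using P1_def P2'_def hd_rr C_ne by fastforce
  have B: "{v\<in>C. v < rotate1 u'} = Q1 \<union> rotate1 ` Q2'"
  proof
    show "{v\<in>C. v < rotate1 u'} \<subseteq> Q1 \<union> rotate1 ` Q2'"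
    proof
      fix v assume v: "v \<in> {v\<in>C. v < rotate1 u'}"
      then have vC: "v \<in> C" and vl: "v < rotate1 u'" by auto
      have "last (rotate1 u') \<le> last v" using PC_L[OF vC rot1_C[OF u'C]] vl by simp
      then have "c \<le> last v" using rot1u' by simp
      then show "v \<in> Q1 \<union> rotate1 ` Q2'"
      proof (cases "c < last v")
        case True then show ?thesis using vC Q1_def by simp
      next
        case False
        then have lc: "last v = c" using \<open>c \<le> last v\<close> by simp
        have vd: "v = butlast v @ [c]" using lc C_ne[OF vC] by (metis append_butlast_last_id)
        have lb: "length (butlast v) = length (tl u')" using C_len vC lu' by simp
        have "butlast v @ [c] < tl u' @ [c]" using vl vd rot1u' by simp
        then have bl: "butlast v < tl u'" using lex_app_less[OF lb] by auto
        have "c # butlast v = rr v" unfolding rr_def using lc by simp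
        then have cC: "c # butlast v \<in> C" using rr_C[OF vC] by simp
        have "c # butlast v < u'" using bl u'_dec by (metis Cons_less_Cons)
        then have "c # butlast v \<in> Q2'" using cC Q2'_def by simp
        moreover have "rotate1 (c # butlast v) = v" using vd by simp
        ultimately show ?thesis by (metis UnI2 image_eqI)
      qed
    qed
  next
    show "Q1 \<union> rotate1 ` Q2' \<subseteq> {v\<in>C. v < rotate1 u'}"
    proof
      fix v assume "v \<in> Q1 \<union> rotate1 ` Q2'"
      then show "v \<in> {v\<in>C. v < rotate1 u'}"
      proof
        assume "v \<in> Q1"
        then have vC: "v \<in> C" and lv: "c < last v" using Q1_def by auto
        have "v < rotate1 u'"
        proof (rule ccontr)
          assume "\<not> v < rotate1 u'"
          then have "rotate1 u' \<le> v" by simp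
          then have "last v \<le> last (rotate1 u')" using PC_L[OF rot1_C[OF u'C] vC] by simp
          then show False using lv rot1u' by simp
        qed
        then show ?thesis using vC by simp
      next
        assume "v \<in> rotate1 ` Q2'"
        then obtain z where z: "z \<in> C" "hd z = c" "z < u'" "v = rotate1 z" using Q2'_def by auto
        have zd: "z = c # tl z" using z(2) C_ne[OF z(1)] by (metis list.collapse)
        have lz: "length (tl z) = length (tl u')" using C_len z(1) lu' by simp
        have "tl z < tl u'" using z(3) zd u'_dec by (metis Cons_less_Cons order_less_irrefl)
        then have "tl z @ [c] < tl u' @ [c]" using lex_app_less[OF lz] by simp
        moreover have "v = tl z @ [c]" using z(4) zd by (metis rotate1.simps(2))
        ultimately show ?thesis using rot1_C[OF z(1)] z(4) rot1u' by simp
      qed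
    qed
  qed
  have B': "Q1 \<inter> rotate1 ` Q2' = {}"
  proof -
    have "\<And>z. z \<in> Q2' \<Longrightarrow> last (rotate1 z) = c"
      using Q2'_def C_ne by (metis (mono_tags, lifting) list.collapse mem_Collect_eq rotate1.simps(2) last_snoc)
    then show ?thesis using Q1_def by fastforce
  qed
  have inj1: "inj_on rr P2'" using rr_inj P2'_def inj_on_subset by fastforce
  have inj2: "inj_on rotate1 Q2'" using inj_rotate1 inj_on_subset by blast
  have C1: "{v\<in>C. v<u} = Q1 \<union> P2'"
  proof -
    have "\<And>v. v \<in> C \<Longrightarrow> v < u \<Longrightarrow> c \<le> last v" using PC_L u c_def by fastforce
    moreover have "\<And>v. v \<in> C \<Longrightarrow> c < last v \<Longrightarrow> v < u"
      using PC_L u c_def by (metis leD le_less_linear)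
    ultimately show ?thesis unfolding Q1_def P2'_def by (auto simp: order_le_less)
  qed
  have C1': "Q1 \<inter> P2' = {}" unfolding Q1_def P2'_def using order_less_irrefl by blast
  have C2: "{v\<in>C. v<u'} = P1 \<union> Q2'"
  proof -
    have h1: "hd v \<le> c" if "v \<in> C" "v < u'" for v
      using lex_hd_mono[OF C_ne[OF that(1)] u'ne] that(2) hdu' by simp
    have h2: "v < u'" if "v \<in> C" "hd v < c" for v
      using lex_hd_less[OF C_ne[OF that(1)] u'ne] that(2) hdu' by simp
    show ?thesis unfolding P1_def Q2'_def using h1 h2 by (auto simp: order_le_less)
  qed
  have C2': "P1 \<inter> Q2' = {}" unfolding P1_def Q2'_def using order_less_irrefl by blast
  have e1: "rk (rr u) = card P1 + card P2'"
    unfolding rk_def A using card_Un_disjoint[OF fin(1) finite_imageI[OF fin(2)] A'] card_image[OF inj1] by simp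
  have e2: "rk (rotate1 u') = card Q1 + card Q2'"
    unfolding rk_def B using card_Un_disjoint[OF fin(3) finite_imageI[OF fin(4)] B'] card_image[OF inj2] by simp
  have e3: "x = card Q1 + card P2'"
    using x_def unfolding rk_def C1 using card_Un_disjoint[OF fin(3) fin(2) C1'] by simp
  have e4: "n - 1 - x = card P1 + card Q2'"
    using rku' unfolding rk_def C2 using card_Un_disjoint[OF fin(1) fin(4) C2'] by simp
  show ?thesis using e1 e2 e3 e4 x(1) u'_def x_def by simp
qed


lemma mirror_nth: "t < L \<Longrightarrow> x < n \<Longrightarrow> Rs ! (n - 1 - x) ! t = Rs ! x ! (L - 1 - t)"
proof (induction t arbitrary: x)
  case 0
  have "Rs ! (n - 1 - x) ! 0 = hd (Rs ! (n - 1 - x))"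
    using C_ne[OF Rs_nth_C[of "n - 1 - x"]] 0 by (simp add: hd_conv_nth)
  also have "\<dots> = last (Rs ! x)" using hd_mirror 0 by simp
  also have "\<dots> = Rs ! x ! (L - 1)"
    using C_ne[OF Rs_nth_C[OF 0(2)]] C_len[OF Rs_nth_C[OF 0(2)]] by (simp add: last_conv_nth)
  finally show ?case by simp
next
  case (Suc t)
  define u where "u = Rs ! x"
  have uC: "u \<in> C" using Rs_nth_C Suc u_def by simp
  have rku: "rk u = x" using rk_nth Suc u_def by simp
  define u' where "u' = Rs ! (n - 1 - x)"
  have u'C: "u' \<in> C" using Rs_nth_C Suc u'_def by simp
  have lu: "length u = L" "length u' = L" using C_len uC u'C by auto
  define y where "y = rk (rr u)"
  have y: "y < n" "Rs ! y = rr u" using rk_C[OF rr_C[OF uC]] y_def by auto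
  have ri: "rk (rotate1 u') + y = n - 1" using rank_identity[OF uC] rku u'_def y_def by simp
  have r1C: "rotate1 u' \<in> C" using rot1_C[OF u'C] .
  have r1: "rotate1 u' = Rs ! (n - 1 - y)"
    using rk_C[OF r1C] ri by (metis add_diff_cancel_right')
  have "u' ! Suc t = rotate1 u' ! t"
  proof -
    have "u' \<noteq> []" using C_ne u'C by simp
    then have "rotate1 u' = tl u' @ [hd u']" by (rule rotate1_hd_tl)
    moreover have "t < length (tl u')" using Suc lu by simp
    ultimately show ?thesis by (simp add: nth_append nth_tl)
  qed
  also have "\<dots> = Rs ! (n - 1 - y) ! t" using r1 by simp
  also have "\<dots> = Rs ! y ! (L - 1 - t)" using Suc.IH Suc.prems y(1) by simp
  also have "\<dots> = rr u ! (L - 1 - t)" using y by simp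
  also have "\<dots> = u ! (L - 1 - Suc t)"
  proof -
    have "L - 1 - t = Suc (L - 1 - Suc t)" using Suc.prems by simp
    then have "rr u ! (L - 1 - t) = butlast u ! (L - 1 - Suc t)" unfolding rr_def by simp
    also have "\<dots> = u ! (L - 1 - Suc t)" using Suc.prems lu by (simp add: nth_butlast)
    finally show ?thesis .
  qed
  finally show ?case unfolding u_def u'_def .
qed

lemma mirror: "x < n \<Longrightarrow> rev (Rs ! x) = Rs ! (n - 1 - x)"
proof -
  assume x: "x < n"
  have l1: "length (Rs ! x) = L" using C_len Rs_nth_C x by simp
  have l2: "length (Rs ! (n - 1 - x)) = L" using C_len Rs_nth_C x by simp
  show ?thesis
  proof (rule nth_equalityI)
    show "length (rev (Rs ! x)) = length (Rs ! (n - 1 - x))" using l1 l2 by simp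
    fix t assume "t < length (rev (Rs ! x))"
    then have t: "t < L" using l1 by simp
    then show "rev (Rs ! x) ! t = Rs ! (n - 1 - x) ! t"
      using mirror_nth[OF t x] l1 by (simp add: rev_nth)
  qed
qed

lemma rev_C: "u \<in> C \<Longrightarrow> rev u \<in> C"
proof -
  assume "u \<in> C"
  then obtain x where x: "x < n" "u = Rs ! x" using C_obtain by blast
  then have "n - 1 - x < n" by simp
  then show ?thesis using mirror[OF x(1)] x(2) Rs_nth_C by simp
qed

lemma rev_less: "u \<in> C \<Longrightarrow> v \<in> C \<Longrightarrow> u < v \<Longrightarrow> rev v < rev u"
proof -
  assume u: "u \<in> C" and v: "v \<in> C" and uv: "u < v"
  obtain i where i: "i < n" "u = Rs ! i" using C_obtain u by blast
  obtain j where j: "j < n" "v = Rs ! j" using C_obtain v by blast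
  have "i < j" using Rs_less_iff i j uv by simp
  then have "n - 1 - j < n - 1 - i" using j by simp
  then have "Rs ! (n - 1 - j) < Rs ! (n - 1 - i)" using Rs_less_iff i j by simp
  then show ?thesis using mirror i j by simp
qed


definition adj where "adj u v \<longleftrightarrow> u \<in> C \<and> v \<in> C \<and> u < v \<and> \<not> (\<exists>z\<in>C. u < z \<and> z < v)"

lemma adj_nth: "Suc j < n \<Longrightarrow> adj (Rs ! j) (Rs ! Suc j)"
proof -
  assume j: "Suc j < n"
  have "\<not> (\<exists>z\<in>C. Rs ! j < z \<and> z < Rs ! Suc j)"
  proof
    assume "\<exists>z\<in>C. Rs ! j < z \<and> z < Rs ! Suc j"
    then obtain z where z: "z \<in> C" "Rs ! j < z" "z < Rs ! Suc j" by blast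
    obtain y where y: "y < n" "z = Rs ! y" using C_obtain z(1) by blast
    have "j < y" using Rs_less_iff[of j y] y z j by simp
    moreover have "y < Suc j" using Rs_less_iff[of y "Suc j"] y z j by simp
    ultimately show False by simp
  qed
  moreover have "Rs ! j < Rs ! Suc j" using Rs_less_iff j by simp
  ultimately show ?thesis unfolding adj_def using Rs_nth_C j by simp
qed

lemma adj_rev: "adj u v \<Longrightarrow> adj (rev v) (rev u)"
proof -
  assume a: "adj u v"
  then have uC: "u \<in> C" and vC: "v \<in> C" and uv: "u < v" unfolding adj_def by auto
  have "\<not> (\<exists>z\<in>C. rev v < z \<and> z < rev u)"
  proof
    assume "\<exists>z\<in>C. rev v < z \<and> z < rev u"
    then obtain z where z: "z \<in> C" "rev v < z" "z < rev u" by blast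
    have "rev z < rev (rev v)" using rev_less[OF rev_C[OF vC] z(1) z(2)] .
    moreover have "rev (rev u) < rev z" using rev_less[OF z(1) rev_C[OF uC] z(3)] .
    ultimately show False using a rev_C[OF z(1)] unfolding adj_def by auto
  qed
  then show ?thesis unfolding adj_def using rev_C uC vC rev_less uv by simp
qed

lemma adj_succ_unique: "adj u v \<Longrightarrow> adj u v' \<Longrightarrow> v = v'"
  unfolding adj_def by (metis linorder_neqE)

lemma suffix_between:
  "u \<in> C \<Longrightarrow> z \<in> C \<Longrightarrow> v \<in> C \<Longrightarrow> u \<le> z \<Longrightarrow> z \<le> v \<Longrightarrow> u = u0 @ x \<Longrightarrow> v = v0 @ x
   \<Longrightarrow> \<exists>z0. z = z0 @ x"
proof (induction x arbitrary: u z v u0 v0 rule: rev_induct)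
  case Nil then show ?case by simp
next
  case (snoc c xs)
  have lu: "last u = c" and lv: "last v = c" using snoc.prems by auto
  have zne: "z \<noteq> []" using C_ne snoc.prems by simp
  have "last z \<le> c" using PC_L[OF snoc.prems(1,2,4)] lu by simp
  moreover have "c \<le> last z" using PC_L[OF snoc.prems(2,3,5)] lv by simp
  ultimately have lz: "last z = c" by simp
  define bz where "bz = butlast z"
  have zd: "z = bz @ [c]" using lz zne bz_def by (metis append_butlast_last_id)
  have "length u = L" "length z = L" "length v = L"
    using C_len[OF snoc.prems(1)] C_len[OF snoc.prems(2)] C_len[OF snoc.prems(3)] by blast+
  then have lens: "length (u0 @ xs) = length bz" "length bz = length (v0 @ xs)"
    using snoc.prems(6,7) zd by auto
  have "u0 @ xs \<le> bz"
    using snoc.prems(4,6) zd lex_app_le[OF lens(1), of "[c]" "[c]"] by auto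
  then have o1: "(c # u0) @ xs \<le> c # bz" by simp
  have "bz \<le> v0 @ xs"
    using snoc.prems(5,7) zd lex_app_le[OF lens(2), of "[c]" "[c]"] by auto
  then have o2: "c # bz \<le> (c # v0) @ xs" by simp
  have C1: "(c # u0) @ xs \<in> C" using C_swap[of "u0 @ xs" "[c]"] snoc.prems(1,6) by simp
  have C2: "c # bz \<in> C" using C_swap[of bz "[c]"] snoc.prems(2) zd by simp
  have C3: "(c # v0) @ xs \<in> C" using C_swap[of "v0 @ xs" "[c]"] snoc.prems(3,7) by simp
  obtain z0' where z0': "c # bz = z0' @ xs" using snoc.IH[OF C1 C2 C3 o1 o2 refl refl] by blast
  have "length (c # bz) = length (c # u0 @ xs)" using lens by simp
  then have "length z0' = Suc (length u0)" using z0' by simp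
  then obtain z0 where "z0' = c # z0" using z0' by (cases z0') auto
  then have "bz = z0 @ xs" using z0' by simp
  then show ?case using zd by simp
qed

lemma adj_shift_right:
  assumes a: "adj (y1 @ x) (y2 @ x)" and len: "length y1 = length y2"
  shows "adj (x @ y1) (x @ y2)"
proof -
  have C1: "x @ y1 \<in> C" and C2: "x @ y2 \<in> C" using a C_swap unfolding adj_def by auto
  have "y1 < y2" using a lex_app_less[OF len] unfolding adj_def by auto
  then have lt: "x @ y1 < x @ y2" by (simp add: lex_pre_less)
  have "\<not> (\<exists>z\<in>C. x @ y1 < z \<and> z < x @ y2)"
  proof
    assume "\<exists>z\<in>C. x @ y1 < z \<and> z < x @ y2"
    then obtain z where z: "z \<in> C" "x @ y1 < z" "z < x @ y2" by blast
    have "x @ y1 \<le> z" "z \<le> x @ y2" using z by auto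
    then obtain z0 where z0: "z = x @ z0" using lex_prefix_between[of x y1 z y2] by blast
    have "length (x @ y1) = L" "length z = L" using C_len[OF C1] C_len[OF z(1)] by blast+
    then have lz: "length y1 = length z0" "length z0 = length y2" using z0 len by auto
    have "y1 < z0" "z0 < y2" using z z0 by (auto simp: lex_pre_less)
    then have "y1 @ x < z0 @ x" "z0 @ x < y2 @ x"
      using lex_app_less[OF lz(1)] lex_app_less[OF lz(2)] by auto
    moreover have "z0 @ x \<in> C" using C_swap z z0 by simp
    ultimately show False using a unfolding adj_def by auto
  qed
  then show ?thesis unfolding adj_def using C1 C2 lt by simp
qed

lemma adj_shift_left:
  assumes a: "adj (x @ y1) (x @ y2)" and len: "length y1 = length y2"
  shows "adj (y1 @ x) (y2 @ x)"
proof -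
  have C1: "y1 @ x \<in> C" and C2: "y2 @ x \<in> C" using a C_swap unfolding adj_def by auto
  have "y1 < y2" using a unfolding adj_def by (simp add: lex_pre_less)
  then have lt: "y1 @ x < y2 @ x" using lex_app_less[OF len] by simp
  have "\<not> (\<exists>z\<in>C. y1 @ x < z \<and> z < y2 @ x)"
  proof
    assume "\<exists>z\<in>C. y1 @ x < z \<and> z < y2 @ x"
    then obtain z where z: "z \<in> C" "y1 @ x < z" "z < y2 @ x" by blast
    have "y1 @ x \<le> z" "z \<le> y2 @ x" using z by auto
    then obtain z0 where z0: "z = z0 @ x"
      using suffix_between[OF C1 z(1) C2 _ _ refl refl] by blast
    have "length (y1 @ x) = L" "length z = L" using C_len[OF C1] C_len[OF z(1)] by blast+
    then have lz: "length y1 = length z0" "length z0 = length y2" using z0 len by auto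
    have "y1 < z0" "z0 < y2" using z z0 lex_app_less[OF lz(1)] lex_app_less[OF lz(2)] by auto
    then have "x @ y1 < x @ z0" "x @ z0 < x @ y2" by (auto simp: lex_pre_less)
    moreover have "x @ z0 \<in> C" using C_swap z z0 by simp
    ultimately show False using a unfolding adj_def by auto
  qed
  then show ?thesis unfolding adj_def using C1 C2 lt by simp
qed


end

locale pcf = pcw +
  fixes l :: "'a list" and ps :: "'a list list"
  assumes lC: "l \<in> conjugates w"
    and psf: "palindromic_special_factorization l ps"
begin

definition as where "as = sorted_list_of_set (set l)"
definition k where "k = card (set l)"

lemma l_C: "l \<in> C" using lC C_def by simp

lemma set_C: "u \<in> C \<Longrightarrow> set u = set w"
  using C_iff by auto

lemma as_set: "set as = set w"
  unfolding as_def using set_C[OF l_C] by simp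

lemma as_sorted: "sorted_wrt (<) as"
  unfolding as_def by simp

lemma as_len: "length as = k"
  unfolding as_def k_def by simp

lemma ps_len: "length ps + 1 = k"
  using psf unfolding palindromic_special_factorization_def special_factorization_def k_def by simp

lemma l_eq: "l = interleave as ps"
  using psf unfolding palindromic_special_factorization_def special_factorization_def as_def by simp

lemma pal: "p \<in> set ps \<Longrightarrow> rev p = p"
  using psf unfolding palindromic_special_factorization_def by simp

lemma l_len: "length l = L" using C_len l_C by simp

lemma hd_set: "u \<in> C \<Longrightarrow> hd u \<in> set w"
  using set_C C_ne by (metis hd_in_set)

lemma last_set: "u \<in> C \<Longrightarrow> last u \<in> set w"
  using set_C C_ne by (metis last_in_set)

lemma letter_idx: "e \<in> set w \<Longrightarrow> \<exists>j<k. as ! j = e"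
  using as_set as_len by (metis in_set_conv_nth)

lemma as_less_iff: "i < k \<Longrightarrow> j < k \<Longrightarrow> (as ! i < as ! j) = (i < j)"
  using strict_nth_less_iff[OF as_sorted] as_len by simp

lemma as_inj: "i < k \<Longrightarrow> j < k \<Longrightarrow> as ! i = as ! j \<Longrightarrow> i = j"
  using as_sorted as_len strict_sorted_iff nth_eq_iff_index_eq by metis

lemma as_in: "i < k \<Longrightarrow> as ! i \<in> set w"
  using as_set as_len nth_mem by metis

lemma consec:
  assumes i: "Suc i < k" and e: "e \<in> set w" and le1: "as ! i \<le> e" and le2: "e \<le> as ! Suc i"
  shows "e = as ! i \<or> e = as ! Suc i"
proof -
  obtain j where j: "j < k" "as ! j = e" using letter_idx e by blast
  have "\<not> j < i" using as_less_iff[of j i] j i le1 by auto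
  moreover have "\<not> Suc i < j" using as_less_iff[of "Suc i" j] j i le2 by auto
  ultimately have "j = i \<or> j = Suc i" by auto
  then show ?thesis using j by auto
qed

lemma occur: "e \<in> set w \<Longrightarrow> \<exists>z\<in>C. hd z = e"
proof -
  assume "e \<in> set w"
  then obtain p q where "w = p @ e # q" by (meson split_list)
  then have "p @ (e # q) \<in> C" using w_C by simp
  then have "(e # q) @ p \<in> C" by (rule C_swap)
  then show ?thesis by force
qed

lemma factor: "Suc i < k \<Longrightarrow> \<exists>\<alpha> \<beta>. l = \<alpha> @ [as ! i] @ ps ! i @ [as ! Suc i] @ \<beta>"
proof -
  assume i: "Suc i < k"
  obtain a as' where as: "as = a # as'" using as_len i by (cases as) auto
  have "length ps = length as'" using ps_len as_len as by simp
  moreover have "i < length ps" using ps_len i by simp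
  ultimately show ?thesis using interleave_factor[of ps as' i a] l_eq as by simp
qed

lemma sum_len: "(\<Sum>i<k - 1. Suc (length (ps ! i))) = L - 1"
proof -
  obtain a as' where as: "as = a # as'" using as_len ps_len by (cases as) auto
  have "length ps = length as'" using ps_len as_len as by simp
  then have "length l = Suc (\<Sum>i<length ps. Suc (length (ps ! i)))"
    using interleave_length[of ps as' a] l_eq as by simp
  moreover have "length ps = k - 1" using ps_len by simp
  ultimately show ?thesis using l_len by simp
qed

definition A where "A i = Max {v\<in>C. hd v = as ! i}"
definition B where "B i = Min {v\<in>C. hd v = as ! Suc i}"

lemma A_props:
  assumes "i < k"
  shows "A i \<in> C" "hd (A i) = as ! i" "\<And>v. v \<in> C \<Longrightarrow> hd v = as ! i \<Longrightarrow> v \<le> A i"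
proof -
  have fin: "finite {v\<in>C. hd v = as ! i}" using C_finite by simp
  have ne: "{v\<in>C. hd v = as ! i} \<noteq> {}" using occur[OF as_in[OF assms]] by auto
  have "A i \<in> {v\<in>C. hd v = as ! i}" unfolding A_def using Max_in[OF fin ne] .
  then show "A i \<in> C" "hd (A i) = as ! i" by auto
  show "\<And>v. v \<in> C \<Longrightarrow> hd v = as ! i \<Longrightarrow> v \<le> A i" unfolding A_def using Max_ge[OF fin] by simp
qed

lemma B_props:
  assumes "Suc i < k"
  shows "B i \<in> C" "hd (B i) = as ! Suc i" "\<And>v. v \<in> C \<Longrightarrow> hd v = as ! Suc i \<Longrightarrow> B i \<le> v"
proof -
  have fin: "finite {v\<in>C. hd v = as ! Suc i}" using C_finite by simp
  have ne: "{v\<in>C. hd v = as ! Suc i} \<noteq> {}" using occur[OF as_in[OF assms]] by auto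
  have "B i \<in> {v\<in>C. hd v = as ! Suc i}" unfolding B_def using Min_in[OF fin ne] .
  then show "B i \<in> C" "hd (B i) = as ! Suc i" by auto
  show "\<And>v. v \<in> C \<Longrightarrow> hd v = as ! Suc i \<Longrightarrow> B i \<le> v" unfolding B_def using Min_le[OF fin] by simp
qed

lemma Fpair: "Suc i < k \<Longrightarrow> adj (A i) (B i)"
proof -
  assume i: "Suc i < k"
  note a = A_props[OF Suc_lessD[OF i]] and b = B_props[OF i]
  have cd: "as ! i < as ! Suc i" using as_less_iff i by simp
  have lt: "A i < B i" using lex_hd_less[OF C_ne[OF a(1)] C_ne[OF b(1)]] a(2) b(2) cd by simp
  have "\<not> (\<exists>z\<in>C. A i < z \<and> z < B i)"
  proof
    assume "\<exists>z\<in>C. A i < z \<and> z < B i"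
    then obtain z where z: "z \<in> C" "A i < z" "z < B i" by blast
    have "as ! i \<le> hd z" using lex_hd_mono[OF C_ne[OF a(1)] C_ne[OF z(1)]] z(2) a(2) by simp
    moreover have "hd z \<le> as ! Suc i" using lex_hd_mono[OF C_ne[OF z(1)] C_ne[OF b(1)]] z(3) b(2) by simp
    ultimately have "hd z = as ! i \<or> hd z = as ! Suc i" using consec[OF i hd_set[OF z(1)]] by simp
    then show False using a(3)[OF z(1)] b(3)[OF z(1)] z by auto
  qed
  then show ?thesis unfolding adj_def using a(1) b(1) lt by simp
qed

lemma Fclass:
  assumes a: "adj u v" and h: "hd u \<noteq> hd v"
  shows "\<exists>i. Suc i < k \<and> u = A i \<and> v = B i"
proof -
  have uC: "u \<in> C" and vC: "v \<in> C" and uv: "u < v" using a unfolding adj_def by auto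
  have "hd u \<le> hd v" using lex_hd_mono[OF C_ne[OF uC] C_ne[OF vC]] uv by simp
  then have huv: "hd u < hd v" using h by simp
  obtain i where i: "i < k" "as ! i = hd u" using letter_idx hd_set[OF uC] by blast
  obtain j where j: "j < k" "as ! j = hd v" using letter_idx hd_set[OF vC] by blast
  have ij: "i < j" using as_less_iff i j huv by metis
  have "j = Suc i"
  proof (rule ccontr)
    assume "j \<noteq> Suc i"
    then have sj: "Suc i < j" using ij by simp
    obtain z where z: "z \<in> C" "hd z = as ! Suc i" using occur as_in sj j(1) by (meson less_trans)
    have "hd u < hd z" using as_less_iff[of i "Suc i"] i z sj j by simp
    then have "u < z" using lex_hd_less[OF C_ne[OF uC] C_ne[OF z(1)]] by simp
    moreover have "hd z < hd v" using as_less_iff[of "Suc i" j] z sj j by simp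
    then have "z < v" using lex_hd_less[OF C_ne[OF z(1)] C_ne[OF vC]] by simp
    ultimately show False using a z(1) unfolding adj_def by auto
  qed
  then have si: "Suc i < k" using j by simp
  note pa = A_props[OF i(1)] and pb = B_props[OF si]
  have "u \<le> A i" using pa(3)[OF uC] i by simp
  moreover have "\<not> u < A i"
  proof
    assume "u < A i"
    moreover have "A i < v"
      using lex_hd_less[OF C_ne[OF pa(1)] C_ne[OF vC]] pa(2) i j huv \<open>j = Suc i\<close> by simp
    ultimately show False using a pa(1) unfolding adj_def by auto
  qed
  ultimately have u: "u = A i" by simp
  have "B i \<le> v" using pb(3)[OF vC] j \<open>j = Suc i\<close> by simp
  moreover have "\<not> B i < v"
  proof
    assume "B i < v"
    moreover have "u < B i"
      using lex_hd_less[OF C_ne[OF uC] C_ne[OF pb(1)]] pb(2) i j huv \<open>j = Suc i\<close> by simp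
    ultimately show False using a pb(1) unfolding adj_def by auto
  qed
  ultimately have "v = B i" by simp
  then show ?thesis using si u by blast
qed


lemma KL1:
  assumes i: "Suc i < k"
  shows "\<exists>z1 z2. A i = z1 @ ps ! i \<and> B i = z2 @ ps ! i \<and> length z1 = length z2 \<and> z1 \<noteq> [] \<and> z2 \<noteq> []
     \<and> as ! i \<le> last z2 \<and> last z1 \<le> as ! Suc i"
proof -
  define \<pi> where "\<pi> = ps ! i"
  define c where "c = as ! i"
  define d where "d = as ! Suc i"
  obtain \<alpha> \<beta> where l: "l = \<alpha> @ [c] @ \<pi> @ [d] @ \<beta>" using factor[OF i] \<pi>_def c_def d_def by blast
  define mt where "mt = d # \<beta> @ \<alpha> @ [c]"
  have "(\<alpha> @ [c] @ \<pi>) @ (d # \<beta>) \<in> C" using l l_C by simp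
  then have "(d # \<beta>) @ (\<alpha> @ [c] @ \<pi>) \<in> C" by (rule C_swap)
  then have QC: "mt @ \<pi> \<in> C" unfolding mt_def by simp
  have "i < length ps" using ps_len i by simp
  then have p\<pi>: "rev \<pi> = \<pi>" using pal \<pi>_def by simp
  have "rev (mt @ \<pi>) \<in> C" using rev_C[OF QC] .
  then have "\<pi> @ rev mt \<in> C" using p\<pi> by simp
  then have Q'C: "rev mt @ \<pi> \<in> C" by (rule C_swap)
  have rmt: "rev mt = c # rev \<alpha> @ rev \<beta> @ [d]" unfolding mt_def by simp
  have hQ': "hd (rev mt @ \<pi>) = c" using rmt by simp
  have hQ: "hd (mt @ \<pi>) = d" unfolding mt_def by simp
  note pa = A_props[OF Suc_lessD[OF i]] and pb = B_props[OF i]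
  have Q'A: "rev mt @ \<pi> \<le> A i" using pa(3)[OF Q'C] hQ' c_def by simp
  have BQ: "B i \<le> mt @ \<pi>" using pb(3)[OF QC] hQ d_def by simp
  have AB: "A i < B i" using Fpair[OF i] unfolding adj_def by simp
  obtain z1 where z1: "A i = z1 @ \<pi>"
    using suffix_between[OF Q'C pa(1) QC Q'A _ refl refl] AB BQ by fastforce
  obtain z2 where z2: "B i = z2 @ \<pi>"
    using suffix_between[OF Q'C pb(1) QC _ BQ refl refl] AB Q'A by fastforce
  have "length (A i) = L" "length (B i) = L" "length (mt @ \<pi>) = L"
    using C_len[OF pa(1)] C_len[OF pb(1)] C_len[OF QC] by blast+
  then have len: "length z1 = length mt" "length z2 = length mt" using z1 z2 by auto
  have lmt: "length mt \<ge> 2" unfolding mt_def by simp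
  have z1ne: "z1 \<noteq> []" and z2ne: "z2 \<noteq> []" using len lmt by auto
  have "rev mt \<le> z1"
    using Q'A z1 lex_app_le[of "rev mt" z1 \<pi> \<pi>] len by auto
  then have o1: "\<pi> @ rev mt \<le> \<pi> @ z1" by (simp add: lex_pre_le)
  have c1: "\<pi> @ z1 \<in> C" using C_swap pa(1) z1 by simp
  have "last (\<pi> @ z1) \<le> last (\<pi> @ rev mt)" using PC_L[OF \<open>\<pi> @ rev mt \<in> C\<close> c1 o1] .
  then have l1: "last z1 \<le> d" using z1ne rmt by simp
  have "z2 \<le> mt"
    using BQ z2 lex_app_le[of z2 mt \<pi> \<pi>] len by auto
  then have o2: "\<pi> @ z2 \<le> \<pi> @ mt" by (simp add: lex_pre_le)
  have c2: "\<pi> @ z2 \<in> C" using C_swap pb(1) z2 by simp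
  have c3: "\<pi> @ mt \<in> C" using C_swap QC by simp
  have "last (\<pi> @ mt) \<le> last (\<pi> @ z2)" using PC_L[OF c2 c3 o2] .
  then have l2: "c \<le> last z2" using z2ne unfolding mt_def by simp
  show ?thesis using z1 z2 len z1ne z2ne l1 l2 \<pi>_def c_def d_def by auto
qed


lemma shift_contra:
  assumes i: "Suc i < k" and i': "Suc i' < k"
    and a: "A i = y1 @ x" and b: "B i = y2 @ x"
    and e1: "x @ y1 = x' @ y1'" and e2: "x @ y2 = x' @ y2'"
    and lt: "length x < length x'"
  shows False
proof -
  obtain us where us: "x = x' @ us \<and> us @ y1 = y1' \<or> x @ us = x' \<and> y1 = us @ y1'"
    using e1 unfolding append_eq_append_conv2 by blast
  then have us2: "x @ us = x' \<and> y1 = us @ y1'" using lt by auto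
  then have une: "us \<noteq> []" using lt by auto
  have "x @ y2 = x @ us @ y2'" using e2 us2 by simp
  then have y2: "y2 = us @ y2'" by simp
  have "hd (A i) = hd us" using a us2 une by simp
  moreover have "hd (B i) = hd us" using b y2 une by simp
  moreover have "hd (A i) = as ! i" using A_props i by simp
  moreover have "hd (B i) = as ! Suc i" using B_props i by simp
  moreover have "as ! i < as ! Suc i" using as_less_iff i by simp
  ultimately show False by simp
qed

lemma no_extra:
  assumes i0: "Suc i0 < k" and a0: "A i0 = y1 @ [e] @ ps ! i0" and b0: "B i0 = y2 @ [e] @ ps ! i0"
  shows False
proof -
  define S where "S = Sigma {..<k - 1} (\<lambda>i. {..length (ps ! i)})"
  define G where "G = S \<union> {(i0, Suc (length (ps ! i0)))}"
  have dec: "\<exists>y1 y2 x. length x = snd p \<and> A (fst p) = y1 @ x \<and> B (fst p) = y2 @ x \<and> Suc (fst p) < k"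
    if p: "p \<in> G" for p
  proof (cases "p \<in> S")
    case True
    then obtain i s where iss: "p = (i, s)" "i < k - 1" "s \<le> length (ps ! i)" unfolding S_def by auto
    then have si: "Suc i < k" by simp
    obtain z1 z2 where z: "A i = z1 @ ps ! i" "B i = z2 @ ps ! i" using KL1[OF si] by blast
    define x where "x = drop (length (ps ! i) - s) (ps ! i)"
    define t where "t = take (length (ps ! i) - s) (ps ! i)"
    have "ps ! i = t @ x" unfolding x_def t_def by simp
    moreover have "length x = s" unfolding x_def using iss by simp
    ultimately have "length x = snd p \<and> A (fst p) = (z1 @ t) @ x \<and> B (fst p) = (z2 @ t) @ x \<and> Suc (fst p) < k"
      using z iss si by simp
    then show ?thesis by blast
  next
    case False
    then have "p = (i0, Suc (length (ps ! i0)))" using p G_def by simp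
    then have "length ([e] @ ps ! i0) = snd p \<and> A (fst p) = y1 @ ([e] @ ps ! i0) \<and> B (fst p) = y2 @ ([e] @ ps ! i0) \<and> Suc (fst p) < k"
      using a0 b0 i0 by simp
    then show ?thesis by blast
  qed
  define g where "g p = drop (L - snd p) (A (fst p)) @ take (L - snd p) (A (fst p))" for p
  have gdec: "g p = x @ y1" if "A (fst p) = y1 @ x" "length x = snd p" "Suc (fst p) < k" for p x y1
  proof -
    have "length (A (fst p)) = L" using C_len A_props that(3) by simp
    then have "length y1 = L - snd p" using that by simp
    then show ?thesis unfolding g_def using that(1) by simp
  qed
  define T where "T = {u\<in>C. \<exists>v. adj u v}"
  have adjd: "adj (x @ y1) (x @ y2)" if "A i = y1 @ x" "B i = y2 @ x" "Suc i < k" for i x y1 y2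
  proof -
    have "length (A i) = L" "length (B i) = L" using C_len A_props B_props that(3) by auto
    then have "length y1 = length y2" using that by simp
    then show ?thesis using adj_shift_right Fpair[OF that(3)] that by simp
  qed
  have gT: "g ` G \<subseteq> T"
  proof
    fix u assume "u \<in> g ` G"
    then obtain p where p: "p \<in> G" "u = g p" by blast
    obtain y1 y2 x where d: "length x = snd p" "A (fst p) = y1 @ x" "B (fst p) = y2 @ x" "Suc (fst p) < k"
      using dec[OF p(1)] by blast
    have "u = x @ y1" using gdec d p by simp
    moreover have "adj (x @ y1) (x @ y2)" using adjd d by simp
    ultimately show "u \<in> T" unfolding T_def adj_def by auto
  qed
  have injg: "inj_on g G"
  proof
    fix p p' assume p: "p \<in> G" and p': "p' \<in> G" and gg: "g p = g p'"
    obtain y1 y2 x where d: "length x = snd p" "A (fst p) = y1 @ x" "B (fst p) = y2 @ x" "Suc (fst p) < k"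
      using dec[OF p] by blast
    obtain y1' y2' x' where d': "length x' = snd p'" "A (fst p') = y1' @ x'" "B (fst p') = y2' @ x'" "Suc (fst p') < k"
      using dec[OF p'] by blast
    have e1: "x @ y1 = x' @ y1'" using gg gdec d d' by metis
    have e2: "x @ y2 = x' @ y2'"
      using adj_succ_unique adjd[OF d(2,3,4)] adjd[OF d'(2,3,4)] e1 by metis
    have "\<not> length x < length x'" using shift_contra[OF d(4) d'(4) d(2) d(3) e1 e2] by blast
    moreover have "\<not> length x' < length x" using shift_contra[OF d'(4) d(4) d'(2) d'(3) e1[symmetric] e2[symmetric]] by blast
    ultimately have lx: "length x = length x'" by simp
    then have "x = x' \<and> y1 = y1'" using e1 by simp
    then have "A (fst p) = A (fst p')" using d d' by simp
    then have "as ! fst p = as ! fst p'" using A_props d(4) d'(4) by (metis Suc_lessD)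
    then have "fst p = fst p'" using as_inj d(4) d'(4) by (meson Suc_lessD)
    moreover have "snd p = snd p'" using lx d d' by simp
    ultimately show "p = p'" by (simp add: prod_eq_iff)
  qed
  have finT: "finite T" unfolding T_def using C_finite by simp
  have "card G \<le> card T" using card_inj_on_le[OF injg gT finT] .
  moreover have "card T \<le> card C - 1"
  proof -
    have Cne: "C \<noteq> {}" using w_C by auto
    have "T \<subseteq> C - {Max C}"
    proof
      fix u assume "u \<in> T"
      then obtain v where "u \<in> C" "adj u v" unfolding T_def by blast
      then have "u < v" "v \<in> C" unfolding adj_def by auto
      then have "u < Max C" using Max_ge[OF C_finite] by (meson order_less_le_trans)
      then show "u \<in> C - {Max C}" using \<open>u \<in> C\<close> by simp
    qed
    then have "card T \<le> card (C - {Max C})" using card_mono C_finite by blast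
    also have "\<dots> = card C - 1" using Max_in[OF C_finite Cne] C_finite by simp
    finally show ?thesis .
  qed
  moreover have "card G = L"
  proof -
    have finS: "finite S" unfolding S_def by simp
    have "card S = (\<Sum>i<k - 1. Suc (length (ps ! i)))" unfolding S_def by (simp add: card_SigmaI)
    then have cS: "card S = L - 1" using sum_len by simp
    have "(i0, Suc (length (ps ! i0))) \<notin> S" unfolding S_def by simp
    then have "card G = card S + 1" unfolding G_def using finS by simp
    then show ?thesis using cS L_pos by simp
  qed
  ultimately show False using C_card L_pos by simp
qed


lemma KL:
  assumes i: "Suc i < k"
  shows "\<exists>m. A i = m @ ps ! i \<and> B i = rev m @ ps ! i \<and> m \<noteq> [] \<and> hd m = as ! i \<and> last m = as ! Suc i"
proof -
  define \<pi> where "\<pi> = ps ! i"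
  define c where "c = as ! i"
  define d where "d = as ! Suc i"
  obtain z1 z2 where z: "A i = z1 @ \<pi>" "B i = z2 @ \<pi>" "length z1 = length z2" "z1 \<noteq> []" "z2 \<noteq> []"
    "c \<le> last z2" "last z1 \<le> d"
    using KL1[OF i] \<pi>_def c_def d_def by blast
  have "i < length ps" using ps_len i by simp
  then have p\<pi>: "rev \<pi> = \<pi>" using pal \<pi>_def by simp
  have ad: "adj (\<pi> @ z1) (\<pi> @ z2)" using adj_shift_right[of z1 \<pi> z2] Fpair[OF i] z by simp
  then have "last (\<pi> @ z2) \<le> last (\<pi> @ z1)" using PC_L unfolding adj_def by auto
  then have le: "last z2 \<le> last z1" using z by simp
  have "last z1 \<noteq> last z2"
  proof
    assume eq: "last z1 = last z2"
    have "A i = butlast z1 @ [last z1] @ ps ! i" using z(1,4) \<pi>_def by simp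
    moreover have "B i = butlast z2 @ [last z1] @ ps ! i" using z(2,5) \<pi>_def eq by simp
    ultimately show False using no_extra[OF i] by blast
  qed
  then have lt: "last z2 < last z1" using le by simp
  have s1: "last z1 \<in> set w" "last z2 \<in> set w"
    using last_set ad z unfolding adj_def by (metis last_appendR)+
  have cd: "c < d" using as_less_iff i c_def d_def by simp
  have "last z2 = c \<or> last z2 = d" using consec[OF i s1(2)] z(6,7) lt c_def d_def by simp
  then have l2: "last z2 = c" using lt z(7) by auto
  have "last z1 = c \<or> last z1 = d" using consec[OF i s1(1)] z(6,7) lt c_def d_def by simp
  then have l1: "last z1 = d" using lt l2 by auto
  have "adj (rev (\<pi> @ z2)) (rev (\<pi> @ z1))" using adj_rev[OF ad] .
  then have ad2: "adj (rev z2 @ \<pi>) (rev z1 @ \<pi>)" using p\<pi> by simp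
  have h2: "hd (rev z2 @ \<pi>) = c" using l2 z(5) by (simp add: hd_rev)
  have h1: "hd (rev z1 @ \<pi>) = d" using l1 z(4) by (simp add: hd_rev)
  obtain i' where i': "Suc i' < k" "rev z2 @ \<pi> = A i'" "rev z1 @ \<pi> = B i'"
    using Fclass[OF ad2] h1 h2 cd by force
  have "as ! i' = c" using A_props i'(1,2) h2 by (metis Suc_lessD)
  then have "i' = i" using as_inj i i'(1) c_def by (meson Suc_lessD)
  then have "rev z2 @ \<pi> = z1 @ \<pi>" using i'(2) z(1) by simp
  then have "z2 = rev z1" by (metis append_same_eq rev_rev_ident)
  moreover have "hd z1 = c" using A_props i z(1,4) c_def by (metis Suc_lessD hd_append2)
  ultimately show ?thesis using z(1,2,4) l1 \<pi>_def c_def d_def by blast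
qed

lemma main:
  assumes j: "Suc j < n"
  shows "\<exists>x y m. Rs ! j = y @ m @ x \<and> Rs ! Suc j = y @ rev m @ x \<and> x @ y \<in> set ps"
proof -
  define u where "u = Rs ! j"
  define v where "v = Rs ! Suc j"
  have a: "adj u v" using adj_nth[OF j] u_def v_def by simp
  then have uC: "u \<in> C" and vC: "v \<in> C" and uv: "u \<noteq> v" unfolding adj_def by auto
  have "length u = length v" using C_len uC vC by simp
  then have "\<exists>x y1 y2. u = x @ y1 \<and> v = x @ y2 \<and> y1 \<noteq> [] \<and> y2 \<noteq> [] \<and> hd y1 \<noteq> hd y2"
    using split_diff uv by simp
  then obtain x y1 y2 where sp: "u = x @ y1" "v = x @ y2" "y1 \<noteq> []" "y2 \<noteq> []" "hd y1 \<noteq> hd y2"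
    by blast
  have "length (x @ y1) = length (x @ y2)" using C_len[OF uC] C_len[OF vC] sp(1,2) by simp
  then have ly: "length y1 = length y2" by simp
  have a2: "adj (y1 @ x) (y2 @ x)" using adj_shift_left[OF _ ly] a sp by simp
  have "hd (y1 @ x) \<noteq> hd (y2 @ x)" using sp(3,4,5) by simp
  then obtain i where i: "Suc i < k" "y1 @ x = A i" "y2 @ x = B i"
    using Fclass[OF a2] by blast
  obtain m where m: "A i = m @ ps ! i" "B i = rev m @ ps ! i" "m \<noteq> []" "hd m = as ! i" "last m = as ! Suc i"
    using KL[OF i(1)] by blast
  have "as ! i < as ! Suc i" using as_less_iff[of i "Suc i"] i(1) by simp
  then have cd: "as ! i \<noteq> as ! Suc i" by simp
  have e1: "y1 @ x = m @ ps ! i" and e2: "y2 @ x = rev m @ ps ! i" using i m by auto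
  have "length x \<le> length (ps ! i)"
  proof (rule ccontr)
    assume "\<not> length x \<le> length (ps ! i)"
    then have lt: "length (ps ! i) < length x" by simp
    obtain us where "y1 = m @ us \<and> us @ x = ps ! i \<or> y1 @ us = m \<and> x = us @ ps ! i"
      using e1 unfolding append_eq_append_conv2 by blast
    moreover have "\<not> (us @ x = ps ! i)"
    proof
      assume "us @ x = ps ! i"
      then have "length x \<le> length (ps ! i)" by (metis length_append le_add2)
      then show False using lt by simp
    qed
    ultimately have us: "y1 @ us = m" "x = us @ ps ! i" by auto
    then have une: "us \<noteq> []" using lt by auto
    have "y2 @ us = rev m" using e2 us by simp
    then have "last (rev m) = last us" using une by (metis last_appendR)
    moreover have "last m = last us" using us une by (metis last_appendR)
    moreover have "last (rev m) = hd m" using m(3) by (simp add: last_rev)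
    ultimately show False using m(4,5) cd by simp
  qed
  then obtain x0 where x0: "y1 = m @ x0" "ps ! i = x0 @ x"
  proof -
    assume le: "length x \<le> length (ps ! i)"
    assume th: "\<And>x0. y1 = m @ x0 \<Longrightarrow> ps ! i = x0 @ x \<Longrightarrow> thesis"
    obtain us where h: "y1 = m @ us \<and> us @ x = ps ! i \<or> y1 @ us = m \<and> x = us @ ps ! i"
      using e1 unfolding append_eq_append_conv2 by blast
    have "y1 = m @ us \<and> us @ x = ps ! i"
    proof (cases "y1 = m @ us \<and> us @ x = ps ! i")
      case False
      then have h2: "y1 @ us = m" "x = us @ ps ! i" using h by auto
      then have "length x = length us + length (ps ! i)" by simp
      then have "us = []" using le by simp
      then show ?thesis using h2 by simp
    qed
    then show thesis using th by simp
  qed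
  have "y2 = rev m @ x0" using e2 x0 by simp
  moreover have "ps ! i \<in> set ps" using ps_len i by simp
  ultimately have "u = x @ m @ x0 \<and> v = x @ rev m @ x0 \<and> x0 @ x \<in> set ps" using sp x0 by simp
  then show ?thesis unfolding u_def v_def by blast
qed

end

theorem theorem6p2:
  fixes w l :: "'a::linorder list" and ps :: "'a list list" and j :: nat
  assumes "perfectly_clustering w"
    and "l \<in> conjugates w" and "lyndon l"
    and "palindromic_special_factorization l ps"
    and "Suc j < length (bw_matrix w)"
  shows "\<exists>x y m. bw_matrix w ! j = y @ m @ x \<and> bw_matrix w ! Suc j = y @ rev m @ x
                 \<and> x @ y \<in> set ps"
proof -
  interpret pcf w l ps
    using assms(1,2,4) by (simp add: pcf_def pcw_def pcf_axioms_def)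
  have "Suc j < n" using assms(5) unfolding n_def Rs_def by simp
  then show ?thesis using main unfolding Rs_def by simp
qed

end
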